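(* Let $K=(V,E)$ be a finite graph with at least $s\geqslant1$ connected components. Let $\mathscr{C}$ be a color set of size at least $|V|$ that contains at least $|V|-s+1$ distinct colors. Then there exists a coloring of $K$ by $\mathscr{C}$.
   Context: A color set is a finite multiset (elements, i.e. colors, may appear with multiplicities). A coloring of a graph $K=(V,E)$ by a color set $\mathscr{C}$ is a map $\phi\colon V\to\mathscr{C}$, into the elements of the multiset counted with multiplicity, with two properties. First, each element of $\mathscr{C}$ is used at most once, i.e. $|\phi^{-1}(c)|\leqslant1$ for every element $c$ of $\mathscr{C}$. Second, adjacent vertices receive different colors (as values): $\phi(u)\neq\phi(v)$ whenever $(u,v)\in E$. *)

theory Defs
  imports Main "HOL-Library.Multiset"
begin

text \<open>A (finite) graph K = (V,E): vertex set V, edge relation E on V without loops.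
  Edges are treated as undirected for connectivity.\<close>

definition graph :: "'a set \<Rightarrow> ('a \<times> 'a) set \<Rightarrow> bool" where
  "graph V E \<longleftrightarrow> E \<subseteq> V \<times> V \<and> (\<forall>(u,v)\<in>E. u \<noteq> v)"

definition connected_rel :: "'a set \<Rightarrow> ('a \<times> 'a) set \<Rightarrow> ('a \<times> 'a) set" where
  "connected_rel V E = {(u,v). u \<in> V \<and> v \<in> V \<and> (u,v) \<in> (E \<union> E\<inverse>)\<^sup>*}"

definition components :: "'a set \<Rightarrow> ('a \<times> 'a) set \<Rightarrow> 'a set set" where
  "components V E = V // connected_rel V E"

text \<open>A coloring of (V,E) by the color multiset C: each element of C (counted with
  multiplicity) is used at most once, i.e. each color c is assigned to at most
  count C c vertices, and adjacent vertices receive different colors.\<close>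
definition is_coloring :: "'a set \<Rightarrow> ('a \<times> 'a) set \<Rightarrow> 'c multiset \<Rightarrow> ('a \<Rightarrow> 'c) \<Rightarrow> bool" where
  "is_coloring V E C \<phi> \<longleftrightarrow>
     (\<forall>c. card {v \<in> V. \<phi> v = c} \<le> count C c) \<and>
     (\<forall>(u,v)\<in>E. \<phi> u \<noteq> \<phi> v)"

end

theory Submission
  imports Defs
begin

lemma inj_coloring:
  assumes "finite V" "E \<subseteq> V \<times> V" "\<forall>(u,v)\<in>E. u \<noteq> v"
    and "card (set_mset C) \<ge> card V"
  shows "\<exists>\<phi>. is_coloring V E C \<phi>"
proof -
  obtain f where f: "f ` V \<subseteq> set_mset C" "inj_on f V"
    using card_le_inj[OF assms(1) _ assms(4)] by auto
  have "card {v \<in> V. f v = c} \<le> count C c" for c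
  proof (cases "c \<in> set_mset C")
    case True
    have "card {v \<in> V. f v = c} \<le> Suc 0"
      using f(2) assms(1) by (subst card_le_Suc0_iff_eq) (auto simp: inj_on_def)
    then show ?thesis using True by (meson count_greater_zero_iff le_trans less_eq_Suc_le One_nat_def)
  next
    case False
    then have "{v \<in> V. f v = c} = {}" using f(1) by auto
    then show ?thesis by (metis card.empty zero_le)
  qed
  moreover have "\<forall>(u,v)\<in>E. f u \<noteq> f v"
    using f(2) assms(2,3) unfolding inj_on_def by fast
  ultimately show ?thesis unfolding is_coloring_def by blast
qed

lemma card_Union_ge:
  assumes "finite (\<Union>Q)" "\<forall>A\<in>Q. \<forall>B\<in>Q. A \<noteq> B \<longrightarrow> A \<inter> B = {}" "{} \<notin> Q"
  shows "card Q \<le> card (\<Union>Q)"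
proof -
  define f where "f A = (SOME x. x \<in> A)" for A :: "'a set"
  have fA: "A \<in> Q \<Longrightarrow> f A \<in> A" for A
    using assms(3) unfolding f_def by (metis all_not_in_conv someI_ex)
  have "inj_on f Q"
    using fA assms(2) by (metis disjoint_iff inj_onI)
  moreover have "f ` Q \<subseteq> \<Union>Q" using fA by auto
  ultimately show ?thesis using card_inj_on_le assms(1) by blast
qed

lemma main_helper:
  "\<lbrakk> s \<ge> 1; finite V; E \<subseteq> V \<times> V; \<forall>(u,v)\<in>E. u \<noteq> v; \<Union>P = V;
     \<forall>A\<in>P. \<forall>B\<in>P. A \<noteq> B \<longrightarrow> A \<inter> B = {}; {} \<notin> P;
     \<forall>(u,v)\<in>E. \<exists>B\<in>P. u \<in> B \<and> v \<in> B; card P \<ge> s;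
     size C \<ge> card V; card (set_mset C) + s \<ge> card V + 1 \<rbrakk>
   \<Longrightarrow> \<exists>\<phi>. is_coloring V E C \<phi>"
proof (induction s arbitrary: V E P C)
  case 0
  then show ?case by simp
next
  case (Suc s)
  show ?case
  proof (cases "card (set_mset C) \<ge> card V")
    case True
    then show ?thesis using inj_coloring Suc.prems by blast
  next
    case False
    then have s1: "s \<ge> 1" using Suc.prems(11) by linarith
    have "\<exists>c. count C c \<ge> 2"
    proof (rule ccontr)
      assume "\<not> ?thesis"
      have "count C x \<le> count (mset_set (set_mset C)) x" for x
      proof -
        have "count C x \<le> 1" using \<open>\<not> (\<exists>c. count C c \<ge> 2)\<close> by (metis not_le less_2_cases_iff One_nat_def less_Suc_eq_le nat_le_linear)
        then show "count C x \<le> count (mset_set (set_mset C)) x"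
          by (cases "x \<in># C") (auto simp: count_mset_set' not_in_iff)
      qed
      then have "C \<subseteq># mset_set (set_mset C)" by (simp add: subseteq_mset_def)
      then have "size C \<le> card (set_mset C)"
        using size_mset_mono by fastforce
      then show False using False Suc.prems(10) by linarith
    qed
    then obtain c where c: "count C c \<ge> 2" by blast
    have finP: "finite P" using Suc.prems(5,2) by (simp add: finite_UnionD)
    have "P \<noteq> {}" using Suc.prems(9) s1 by auto
    then obtain B where B: "B \<in> P" by blast
    define m where "m = card B"
    define V' where "V' = V - B"
    define P' where "P' = P - {B}"
    have finB: "finite B" using B Suc.prems(2,5) by (meson Union_upper finite_subset)
    have BV: "B \<subseteq> V" using B Suc.prems(5) by auto
    have m1: "m \<ge> 1" using B Suc.prems(7) finB m_def
      by (metis One_nat_def Suc_leI card_gt_0_iff)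
    have V'eq: "\<Union>P' = V'" unfolding P'_def V'_def using Suc.prems(5,6) B by blast
    have cardV': "card V' = card V - m" unfolding V'_def m_def using BV finB card_Diff_subset by blast
    have cardP': "card P' = card P - 1" unfolding P'_def using B finP by simp
    have "card P' \<le> card V'"
      using card_Union_ge[of P'] V'eq Suc.prems(2,6,7) unfolding P'_def V'_def by auto
    have cV: "card V = card V' + m" using cardV' BV finB m_def card_mono Suc.prems(2)
      by (metis le_add_diff_inverse2)
    have md: "m \<le> card (set_mset C)"
      using \<open>card P' \<le> card V'\<close> cardP' cV Suc.prems(9,11) by linarith
    have cin: "c \<in> set_mset C" using c by (metis count_eq_zero_iff not_numeral_le_zero)
    have "m - 1 \<le> card (set_mset C - {c})" using md cin by simp
    then obtain S0 where S0: "S0 \<subseteq> set_mset C - {c}" "card S0 = m - 1" "finite S0"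
      by (metis obtain_subset_with_card_n)
    define S where "S = insert c S0"
    have S: "S \<subseteq> set_mset C" "card S = m" "finite S" "c \<in> S"
      using S0 cin m1 unfolding S_def by (auto simp: card_insert_if)
    obtain g where g: "g ` B \<subseteq> S" "inj_on g B"
      using card_le_inj[OF finB S(3)] S(2) m_def by auto
    define C' where "C' = C - mset_set S"
    have sub: "mset_set S \<subseteq># C"
      using S(1,3) by (auto simp: subseteq_mset_def count_mset_set' Suc_le_eq)
    have sizeC': "size C' = size C - m" unfolding C'_def using size_Diff_submset[OF sub] S(2) by simp
    have setC': "set_mset C - (S - {c}) \<subseteq> set_mset C'"
    proof
      fix x assume x: "x \<in> set_mset C - (S - {c})"
      show "x \<in> set_mset C'"
      proof (cases "x = c")
        case True
        then show ?thesis using c S(3) by (simp add: C'_def count_mset_set' flip: count_greater_zero_iff)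
      next
        case False
        then have "x \<notin> S" using x by auto
        then show ?thesis using x by (simp add: C'_def count_mset_set' flip: count_greater_zero_iff)
      qed
    qed
    have "card (set_mset C - (S - {c})) = card (set_mset C) - (m - 1)"
      using S card_Diff_subset[of "S - {c}" "set_mset C"] by auto
    moreover have "finite (set_mset C')" by simp
    ultimately have dC': "card (set_mset C') \<ge> card (set_mset C) - (m - 1)"
      using setC' card_mono by metis
    define E' where "E' = {(u,v) \<in> E. u \<notin> B}"
    have "\<exists>\<psi>. is_coloring V' E' C' \<psi>"
    proof (rule Suc.IH[of V' E' P' C'])
      show "1 \<le> s" by (rule s1)
      show "finite V'" using Suc.prems(2) V'_def by simp
      show "E' \<subseteq> V' \<times> V'"
      proof
        fix e assume e: "e \<in> E'"
        obtain u v where uv: "e = (u,v)" by fastforce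
        then have "(u,v) \<in> E" "u \<notin> B" using e E'_def by auto
        then obtain A where "A \<in> P" "u \<in> A" "v \<in> A" using Suc.prems(8) by blast
        then have "A \<noteq> B" using \<open>u \<notin> B\<close> by auto
        then have "v \<notin> B" using Suc.prems(6) \<open>A \<in> P\<close> B \<open>v \<in> A\<close> by blast
        then show "e \<in> V' \<times> V'" using uv \<open>(u,v) \<in> E\<close> \<open>u \<notin> B\<close> Suc.prems(3) V'_def by auto
      qed
      show "\<forall>(u,v)\<in>E'. u \<noteq> v" using Suc.prems(4) E'_def by auto
      show "\<Union>P' = V'" by (rule V'eq)
      show "\<forall>A\<in>P'. \<forall>B\<in>P'. A \<noteq> B \<longrightarrow> A \<inter> B = {}" using Suc.prems(6) P'_def by auto
      show "{} \<notin> P'" using Suc.prems(7) P'_def by auto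
      show "\<forall>(u,v)\<in>E'. \<exists>B\<in>P'. u \<in> B \<and> v \<in> B" using Suc.prems(8) E'_def P'_def by fastforce
      show "s \<le> card P'" using cardP' Suc.prems(9) by linarith
      show "card V' \<le> size C'" using sizeC' cardV' Suc.prems(10) by linarith
      show "card V' + 1 \<le> card (set_mset C') + s"
        using dC' cardV' cV md m1 Suc.prems(11) by linarith
    qed
    then obtain \<psi> where psi: "is_coloring V' E' C' \<psi>" by blast
    define \<phi> where "\<phi> v = (if v \<in> B then g v else \<psi> v)" for v
    have "card {v \<in> V. \<phi> v = x} \<le> count C x" for x
    proof -
      have eq: "{v \<in> V. \<phi> v = x} = {v \<in> B. g v = x} \<union> {v \<in> V'. \<psi> v = x}"
        using BV unfolding \<phi>_def V'_def by auto
      have c1: "card {v \<in> B. g v = x} \<le> (if x \<in> S then 1 else 0)"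
      proof (cases "x \<in> S")
        case True
        have "card {v \<in> B. g v = x} \<le> Suc 0"
          using g(2) finB by (subst card_le_Suc0_iff_eq) (auto simp: inj_on_def)
        then show ?thesis using True by simp
      next
        case False
        then have "{v \<in> B. g v = x} = {}" using g(1) by auto
        then show ?thesis by (metis card.empty zero_le)
      qed
      have c2: "card {v \<in> V'. \<psi> v = x} \<le> count C' x"
        using psi unfolding is_coloring_def by blast
      have cC': "count C' x + (if x \<in> S then 1 else 0) = count C x"
        using sub S(3) unfolding C'_def
        by (auto simp: subseteq_mset_def count_mset_set' split: if_splits)
      have "card {v \<in> V. \<phi> v = x} \<le> card {v \<in> B. g v = x} + card {v \<in> V'. \<psi> v = x}"
        unfolding eq using card_Un_le by blast
      then show ?thesis using c1 c2 cC' by linarith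
    qed
    moreover have "\<forall>(u,v)\<in>E. \<phi> u \<noteq> \<phi> v"
    proof (clarify)
      fix u v assume uv: "(u,v) \<in> E" "\<phi> u = \<phi> v"
      then obtain A where A: "A \<in> P" "u \<in> A" "v \<in> A" using Suc.prems(8) by blast
      have neq: "u \<noteq> v" using uv Suc.prems(4) by auto
      show False
      proof (cases "A = B")
        case True
        then show False using uv(2) A neq g(2) unfolding \<phi>_def by (auto simp: inj_on_def)
      next
        case False
        then have "u \<notin> B" "v \<notin> B" using Suc.prems(6) A B by blast+
        then have "(u,v) \<in> E'" using uv E'_def by auto
        then have "\<psi> u \<noteq> \<psi> v" using psi unfolding is_coloring_def by blast
        then show False using uv(2) \<open>u \<notin> B\<close> \<open>v \<notin> B\<close> unfolding \<phi>_def by auto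
      qed
    qed
    ultimately show ?thesis unfolding is_coloring_def by blast
  qed
qed

theorem lemma4p7:
  fixes V :: "'a set" and E :: "('a \<times> 'a) set" and C :: "'c multiset" and s :: nat
  assumes "graph V E" and "finite V"
    and "s \<ge> 1" and "card (components V E) \<ge> s"
    and "size C \<ge> card V"
    and "card (set_mset C) \<ge> card V - s + 1"
  shows "\<exists>\<phi>. is_coloring V E C \<phi>"
proof -
  define R where "R = connected_rel V E"
  have EV: "E \<subseteq> V \<times> V" and nl: "\<forall>(u,v)\<in>E. u \<noteq> v" using assms(1) by (auto simp: graph_def)
  have symE: "(E \<union> E\<inverse>)\<inverse> = E \<union> E\<inverse>" by auto
  have eq: "equiv V R"
    unfolding equiv_def refl_on_def sym_def trans_def R_def connected_rel_def
  proof (intro conjI allI impI ballI)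
    fix x y assume "(x,y) \<in> {(u, v). u \<in> V \<and> v \<in> V \<and> (u, v) \<in> (E \<union> E\<inverse>)\<^sup>*}"
    then have "(x,y) \<in> (E \<union> E\<inverse>)\<^sup>*" "x \<in> V" "y \<in> V" by auto
    then have "(y,x) \<in> ((E \<union> E\<inverse>)\<inverse>)\<^sup>*" by (simp add: rtrancl_converse)
    then show "(y,x) \<in> {(u, v). u \<in> V \<and> v \<in> V \<and> (u, v) \<in> (E \<union> E\<inverse>)\<^sup>*}"
      using symE \<open>x \<in> V\<close> \<open>y \<in> V\<close> by simp
  next
    fix x y z assume "(x,y) \<in> {(u, v). u \<in> V \<and> v \<in> V \<and> (u, v) \<in> (E \<union> E\<inverse>)\<^sup>*}"
      "(y,z) \<in> {(u, v). u \<in> V \<and> v \<in> V \<and> (u, v) \<in> (E \<union> E\<inverse>)\<^sup>*}"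
    then show "(x,z) \<in> {(u, v). u \<in> V \<and> v \<in> V \<and> (u, v) \<in> (E \<union> E\<inverse>)\<^sup>*}"
      by (auto intro: rtrancl_trans)
  qed auto
  show ?thesis
  proof (rule main_helper[of s V E "components V E" C])
    show "1 \<le> s" "finite V" "E \<subseteq> V \<times> V" "\<forall>(u,v)\<in>E. u \<noteq> v" "s \<le> card (components V E)"
      "card V \<le> size C" using assms EV nl by auto
    show "\<Union>(components V E) = V" unfolding components_def R_def[symmetric]
      using Union_quotient[OF eq] .
    show "\<forall>A\<in>components V E. \<forall>B\<in>components V E. A \<noteq> B \<longrightarrow> A \<inter> B = {}"
      unfolding components_def R_def[symmetric] using quotient_disj[OF eq] by blast
    show "{} \<notin> components V E"
      unfolding components_def R_def[symmetric] using in_quotient_imp_non_empty[OF eq] by blast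
    show "\<forall>(u,v)\<in>E. \<exists>B\<in>components V E. u \<in> B \<and> v \<in> B"
    proof (clarify)
      fix u v assume uv: "(u,v) \<in> E"
      then have uvV: "u \<in> V" "v \<in> V" using EV by auto
      have "(u,v) \<in> R" using uv uvV unfolding R_def connected_rel_def by auto
      moreover have "(u,u) \<in> R" using uvV unfolding R_def connected_rel_def by auto
      ultimately show "\<exists>B\<in>components V E. u \<in> B \<and> v \<in> B"
        unfolding components_def R_def[symmetric] using uvV by (auto intro!: quotientI bexI[of _ "R``{u}"])
    qed
    show "card V + 1 \<le> card (set_mset C) + s" using assms(3,6) by linarith
  qed
qed

end
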